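(* Let $q\in\mathbb{C}^*$ with $|q|>1$. Define the entire functions $\widetilde{E}_0(x)=1$ and, for $m\geq1$, $\widetilde{E}_m(x)=f_1(x)\exp\left(\sum_{k=1}^m\frac{x^k}{k(q^k-1)}\right)$, where $f_1(x)=\sum_{n\geq0}\frac{x^n}{(q;q)_n}$. Then there exist constants $C_1,C_2>0$ such that for all integers $m\geq0$ and all $x\in\mathbb{C}$ with $|x|\leq1$, $$|1-\widetilde{E}_m(x)|\leq C_1(C_2|x|)^{m+1}.$$
   Context: $(q;q)_0=1$ and $(q;q)_n=\prod_{k=1}^n(1-q^k)$ for $n\geq1$. *)

theory Defs
  imports "HOL-Analysis.Analysis"
begin

definition qpoch :: "complex \<Rightarrow> nat \<Rightarrow> complex" where
  "qpoch q n = (\<Prod>k=1..n. 1 - q ^ k)"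

definition f1 :: "complex \<Rightarrow> complex \<Rightarrow> complex" where
  "f1 q x = (\<Sum>n. x ^ n / qpoch q n)"

definition Etilde :: "complex \<Rightarrow> nat \<Rightarrow> complex \<Rightarrow> complex" where
  "Etilde q m x = (if m = 0 then 1
     else f1 q x * exp (\<Sum>k=1..m. x ^ k / (of_nat k * (q ^ k - 1))))"

end

theory Submission
  imports Defs "HOL-Complex_Analysis.Weierstrass_Factorization"
begin

lemma qpoch_Suc: "qpoch q (Suc n) = qpoch q n * (1 - q ^ Suc n)"
  unfolding qpoch_def by (simp add: prod.nat_ivl_Suc' mult.commute)

lemma qpow_gt: fixes q :: complex assumes "norm q > 1" "k > 0"
  shows "norm (q ^ k) > 1"
  using assms by (simp add: norm_power one_less_power)

lemma qpow_ne1: fixes q :: complex assumes "norm q > 1" "k > 0"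
  shows "q ^ k \<noteq> 1"
  using qpow_gt[OF assms] by auto

lemma qpoch_nz: fixes q :: complex assumes "norm q > 1"
  shows "qpoch q n \<noteq> 0"
proof (induction n)
  case 0 then show ?case by (simp add: qpoch_def)
next
  case (Suc n) then show ?case using qpow_ne1[OF assms, of "Suc n"] by (simp add: qpoch_Suc)
qed

lemma summable_f1: fixes q :: complex assumes q: "norm q > 1"
  shows "summable (\<lambda>n. x ^ n / qpoch q n)"
proof -
  obtain N where N: "2 * norm x + 1 < norm q ^ N" using real_arch_pow[OF q] by blast
  show ?thesis
  proof (rule summable_ratio_test[where c="1/2" and N=N])
    fix n assume "n \<ge> N"
    then have "norm q ^ N \<le> norm q ^ Suc n" using q by (intro power_increasing) auto
    moreover have "norm (q ^ Suc n) = norm q ^ Suc n" by (rule norm_power)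
    moreover have "norm (q ^ Suc n) - norm (1::complex) \<le> norm (1 - q ^ Suc n)"
      using norm_triangle_ineq2[of "q ^ Suc n" 1] by (simp add: norm_minus_commute)
    ultimately have A: "norm (1 - q ^ Suc n) > 2 * norm x"
      using N by simp
    have "x ^ Suc n / qpoch q (Suc n) = (x ^ n / qpoch q n) * (x / (1 - q ^ Suc n))"
      by (simp add: qpoch_Suc)
    then have "norm (x ^ Suc n / qpoch q (Suc n)) = norm (x ^ n / qpoch q n) * (norm x / norm (1 - q ^ Suc n))"
      by (simp add: norm_mult norm_divide)
    also have "\<dots> \<le> norm (x ^ n / qpoch q n) * (1/2)"
      using A by (intro mult_left_mono) (auto simp: divide_simps)
    finally show "norm (x ^ Suc n / qpoch q (Suc n)) \<le> 1/2 * norm (x ^ n / qpoch q n)" by simp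
  qed auto
qed


lemma f1_funeq: fixes q :: complex assumes q: "norm q > 1"
  shows "f1 q (q * y) = (1 - y) * f1 q y"
proof -
  define g where "g n = y ^ n / qpoch q n - (q * y) ^ n / qpoch q n" for n
  have s1: "g sums (f1 q y - f1 q (q * y))"
    unfolding g_def f1_def
    by (intro sums_diff summable_sums summable_f1[OF q])
  have "g (Suc n) = y * (y ^ n / qpoch q n)" for n
  proof -
    have ne: "1 - q ^ Suc n \<noteq> 0" using qpow_ne1[OF q, of "Suc n"] by auto
    have "g (Suc n) = y ^ Suc n * (1 - q ^ Suc n) / (qpoch q n * (1 - q ^ Suc n))"
      unfolding g_def qpoch_Suc by (simp add: power_mult_distrib diff_divide_distrib right_diff_distrib)
    also have "\<dots> = y * (y ^ n / qpoch q n)" using ne by simp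
    finally show ?thesis .
  qed
  then have "(\<lambda>n. g (Suc n)) sums (y * f1 q y)"
    unfolding f1_def using sums_mult[OF summable_sums[OF summable_f1[OF q, of y]], of y] by simp
  then have "g sums (y * f1 q y + g 0)" by (simp add: sums_Suc_iff)
  then have "g sums (y * f1 q y)" by (simp add: g_def)
  with s1 have "f1 q y - f1 q (q * y) = y * f1 q y" by (rule sums_unique2)
  then show ?thesis by (simp add: algebra_simps)
qed

definition tt :: "complex \<Rightarrow> complex \<Rightarrow> nat \<Rightarrow> complex" where
  "tt q z k = z ^ k / (of_nat k * (q ^ k - 1))"

definition Lf :: "complex \<Rightarrow> complex \<Rightarrow> complex" where
  "Lf q z = (\<Sum>k. tt q z k)"

lemma tt_0 [simp]: "tt q z 0 = 0" by (simp add: tt_def)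

lemma tt_bound: fixes q :: complex assumes q: "norm q > 1"
  shows "norm (tt q z k) \<le> (norm q / (norm q - 1)) * (norm z / norm q) ^ k"
proof (cases "k = 0")
  case True then show ?thesis using q by simp
next
  case False
  define a where "a = norm q"
  have a1: "a > 1" using q a_def by simp
  have "a ^ (k - 1) \<ge> 1" using a1 by simp
  moreover have "a ^ k = a * a ^ (k - 1)" using False by (metis power_eq_if)
  ultimately have ak: "a ^ k - 1 \<ge> a ^ k * (a - 1) / a" using a1 by (simp add: field_simps)
  have "norm (q ^ k) - norm (1::complex) \<le> norm (q ^ k - 1)" by (rule norm_triangle_ineq2)
  then have d1: "norm (q ^ k - 1) \<ge> a ^ k - 1" by (simp add: norm_power a_def)
  have "norm (of_nat k * (q ^ k - 1)) = real k * norm (q ^ k - 1)" by (simp add: norm_mult)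
  also have "\<dots> \<ge> norm (q ^ k - 1)" using False by (simp add: mult_le_cancel_right1 ) 
  finally have d2: "norm (of_nat k * (q ^ k - 1)) \<ge> a ^ k * (a - 1) / a" using d1 ak by linarith
  have pos: "a ^ k * (a - 1) / a > 0" using a1 by simp
  have "norm (tt q z k) = norm z ^ k / norm (of_nat k * (q ^ k - 1))"
    by (simp add: tt_def norm_divide norm_power)
  also have "\<dots> \<le> norm z ^ k / (a ^ k * (a - 1) / a)"
    using d2 pos by (intro frac_le) auto
  also have "\<dots> = (a / (a - 1)) * (norm z / a) ^ k" using a1 by (simp add: field_simps power_divide)
  finally show ?thesis by (simp add: a_def)
qed

lemma summable_tt: fixes q :: complex assumes q: "norm q > 1" and z: "norm z < norm q"
  shows "summable (tt q z)"
proof (rule summable_comparison_test)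
  show "\<exists>N. \<forall>n\<ge>N. norm (tt q z n) \<le> (norm q / (norm q - 1)) * (norm z / norm q) ^ n"
    using tt_bound[OF q] by blast
  show "summable (\<lambda>n. (norm q / (norm q - 1)) * (norm z / norm q) ^ n)"
    using q z by (intro summable_mult summable_geometric) (auto simp: divide_less_eq)
qed


lemma tail_bound: fixes q :: complex assumes q: "norm q > 1" and z: "norm z \<le> 1"
  shows "norm (\<Sum>j. tt q z (j + m)) \<le> (norm q / (norm q - 1))^2 * (norm z / norm q) ^ m"
proof -
  define a where "a = norm q"
  define r where "r = norm z / a"
  have a1: "a > 1" using q a_def by simp
  have r0: "r \<ge> 0" and r1: "r \<le> 1 / a" using z a1 by (auto simp: r_def a_def divide_right_mono)
  have rl: "r < 1" using r1 a1 by (smt (verit) divide_less_eq_1_pos)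
  have sg: "summable (\<lambda>j. (a / (a - 1)) * r ^ (j + m))"
  proof -
    have "(\<lambda>j. (a / (a - 1)) * r ^ (j + m)) = (\<lambda>j. ((a / (a - 1)) * r ^ m) * r ^ j)"
      by (simp add: power_add mult_ac)
    moreover have "summable (\<lambda>j. ((a / (a - 1)) * r ^ m) * r ^ j)"
      using r0 rl by (intro summable_mult summable_geometric) auto
    ultimately show ?thesis by simp
  qed
  have "norm (\<Sum>j. tt q z (j + m)) \<le> (\<Sum>j. (a / (a - 1)) * r ^ (j + m))"
    using sg tt_bound[OF q] by (intro norm_suminf_le) (auto simp: a_def r_def)
  also have "(\<Sum>j. (a / (a - 1)) * r ^ (j + m)) = (a / (a - 1)) * r ^ m * (\<Sum>j. r ^ j)"
  proof -
    have "(\<lambda>j. (a / (a - 1)) * r ^ (j + m)) = (\<lambda>j. ((a / (a - 1)) * r ^ m) * r ^ j)"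
      by (simp add: power_add mult_ac)
    moreover have "(\<Sum>j. ((a / (a - 1)) * r ^ m) * r ^ j) = ((a / (a - 1)) * r ^ m) * (\<Sum>j. r ^ j)"
      using r0 rl by (intro suminf_mult summable_geometric) auto
    ultimately show ?thesis by simp
  qed
  also have "(\<Sum>j. r ^ j) = 1 / (1 - r)" using r0 rl by (intro suminf_geometric) auto
  also have "1 / (1 - r) \<le> a / (a - 1)"
  proof -
    have "1 - r \<ge> (a - 1) / a" using r1 a1 by (simp add: field_simps)
    moreover have "(a - 1) / a > 0" using a1 by simp
    ultimately have "1 / (1 - r) \<le> 1 / ((a - 1) / a)" by (intro frac_le) auto
    then show ?thesis by simp
  qed
  then have "(a / (a - 1)) * r ^ m * (1 / (1 - r)) \<le> (a / (a - 1)) * r ^ m * (a / (a - 1))"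
    using a1 r0 by (intro mult_left_mono) auto
  finally show ?thesis by (simp add: a_def r_def power2_eq_square mult_ac)
qed

lemma log_series: fixes y :: complex assumes "norm y < 1"
  shows "(\<lambda>n. y ^ n / of_nat n) sums (- ln (1 - y))"
proof -
  have "(\<lambda>n. - ((- (- y)) ^ n) / of_nat n) sums ln (1 + (- y))"
    using assms by (intro Ln_series') simp
  then have "(\<lambda>n. - (y ^ n / of_nat n)) sums ln (1 - y)" by simp
  from sums_minus[OF this] show ?thesis by simp
qed

lemma Lf_funeq: fixes q :: complex assumes q: "norm q > 1" and y: "norm y < 1"
  shows "Lf q (q * y) - Lf q y = - ln (1 - y)"
proof -
  have "norm q * norm y < norm q * 1" using q y by (intro mult_strict_left_mono) auto
  then have s1: "summable (tt q (q * y))" using q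
    by (intro summable_tt) (auto simp: norm_mult)
  have s2: "summable (tt q y)" using q y by (intro summable_tt) auto
  have "(\<lambda>k. tt q (q * y) k - tt q y k) = (\<lambda>n. y ^ n / of_nat n)"
  proof
    fix k show "tt q (q * y) k - tt q y k = y ^ k / of_nat k"
    proof (cases "k = 0")
      case True then show ?thesis by simp
    next
      case False
      then have ne: "q ^ k - 1 \<noteq> 0" using qpow_ne1[OF q, of k] by auto
      have "tt q (q * y) k - tt q y k = y ^ k * (q ^ k - 1) / (of_nat k * (q ^ k - 1))"
        unfolding tt_def by (simp add: power_mult_distrib diff_divide_distrib right_diff_distrib mult_ac)
      also have "\<dots> = y ^ k / of_nat k" using ne by simp
      finally show ?thesis .
    qed
  qed
  then have "(\<lambda>n. y ^ n / of_nat n) sums (Lf q (q * y) - Lf q y)"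
    using sums_diff[OF summable_sums[OF s1] summable_sums[OF s2]] by (simp add: Lf_def)
  then show ?thesis using log_series[OF y] sums_unique2 by blast
qed

definition rr :: "complex \<Rightarrow> complex \<Rightarrow> complex" where
  "rr q z = f1 q z * exp (Lf q z)"

lemma rr_funeq: fixes q :: complex assumes q: "norm q > 1" and y: "norm y < 1"
  shows "rr q (q * y) = rr q y"
proof -
  have ne: "1 - y \<noteq> 0" using y by auto
  have "Lf q (q * y) = Lf q y - ln (1 - y)" using Lf_funeq[OF q y] by (simp add: algebra_simps)
  then have "exp (Lf q (q * y)) = exp (Lf q y) / (1 - y)" using ne by (simp add: exp_diff)
  then show ?thesis using ne by (simp add: rr_def f1_funeq[OF q])
qed

lemma rr_iter: fixes q :: complex assumes q: "norm q > 1" and x: "norm x \<le> 1"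
  shows "rr q (x / q ^ n) = rr q x"
proof (induction n)
  case 0 then show ?case by simp
next
  case (Suc n)
  define y where "y = x / q ^ Suc n"
  have qn: "norm (q ^ Suc n) > 1" using qpow_gt[OF q, of "Suc n"] by (simp del: power_Suc)
  have "norm y < 1" using x qn by (simp add: y_def norm_divide divide_less_eq del: power_Suc)
  moreover have "q * y = x / q ^ n" using q by (auto simp: y_def)
  ultimately show ?case using rr_funeq[OF q, of y] Suc by (simp add: y_def)
qed


lemma Lf_split: fixes q :: complex assumes q: "norm q > 1" and z: "norm z \<le> 1"
  shows "Lf q z = (\<Sum>j. tt q z (j + m)) + (\<Sum>i<m. tt q z i)"
  unfolding Lf_def using q z by (intro suminf_split_initial_segment summable_tt) auto

lemma Lf_bound: fixes q :: complex assumes q: "norm q > 1" and z: "norm z \<le> 1"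
  shows "norm (Lf q z) \<le> (norm q / (norm q - 1))^2 * (norm z / norm q)"
  using Lf_split[OF q z, of 1] tail_bound[OF q z, of 1] by simp

lemma f1_0: "f1 q 0 = 1"
proof -
  have "f1 q 0 = (\<Sum>n. (1 / qpoch q n) * 0 ^ n)" unfolding f1_def by simp
  also have "\<dots> = 1 / qpoch q 0" by (rule powser_zero)
  also have "\<dots> = 1" by (simp add: qpoch_def)
  finally show ?thesis .
qed

lemma rr_one: fixes q :: complex assumes q: "norm q > 1" and x: "norm x \<le> 1"
  shows "rr q x = 1"
proof -
  define z where "z n = x * (inverse q) ^ n" for n
  have zeq: "z n = x / q ^ n" for n by (simp add: z_def divide_inverse power_inverse)
  have iq: "norm (inverse q) < 1" using q by (simp add: norm_inverse inverse_less_1_iff)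
  have z0: "z \<longlonglongrightarrow> 0" unfolding z_def using iq
    by (intro tendsto_mult_right_zero LIMSEQ_power_zero)
  have zn: "norm (z n) \<le> 1" for n
  proof -
    have "norm (inverse q ^ n) \<le> 1" using iq by (simp add: norm_power power_le_one)
    then have "norm x * norm (inverse q ^ n) \<le> 1 * 1" using x by (intro mult_mono) auto
    then show ?thesis by (simp add: z_def norm_mult)
  qed
  have feq: "f1 q = (\<lambda>z. \<Sum>n. (1 / qpoch q n) * z ^ n)" unfolding f1_def by (simp add: fun_eq_iff)
  have "isCont (f1 q) 0" unfolding feq
    using summable_f1[OF q] by (intro isCont_powser_converges_everywhere) simp
  then have t1: "(\<lambda>n. f1 q (z n)) \<longlonglongrightarrow> 1" using isCont_tendsto_compose[OF _ z0] f1_0 by metis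
  have t2: "(\<lambda>n. Lf q (z n)) \<longlonglongrightarrow> 0"
  proof (rule Lim_null_comparison)
    show "\<forall>\<^sub>F n in sequentially. norm (Lf q (z n)) \<le> (norm q / (norm q - 1))^2 * (norm (z n) / norm q)"
      using Lf_bound[OF q zn] by simp
    have "(\<lambda>n. norm (z n)) \<longlonglongrightarrow> 0" using z0 by (simp add: tendsto_norm_zero)
    then show "(\<lambda>n. (norm q / (norm q - 1))^2 * (norm (z n) / norm q)) \<longlonglongrightarrow> 0"
      by (intro tendsto_mult_right_zero tendsto_divide_zero)
  qed
  have "(\<lambda>n. rr q (z n)) \<longlonglongrightarrow> 1 * exp 0" unfolding rr_def
    by (intro tendsto_mult t1 tendsto_exp t2)
  moreover have "(\<lambda>n. rr q (z n)) = (\<lambda>n. rr q x)" using rr_iter[OF q x] zeq by simp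
  ultimately have "(\<lambda>n. rr q x) \<longlonglongrightarrow> 1" by simp
  then show ?thesis by (simp add: LIMSEQ_const_iff)
qed


lemma exp_bound: fixes w :: complex assumes "norm w \<le> K"
  shows "norm (exp w - 1) \<le> 2 * (exp K + 1) * norm w"
proof (cases "norm w \<le> 1/2")
  case True
  then have "norm (exp w - 1) \<le> 3/2 * norm w" by (rule norm_exp_bounds(2))
  moreover have "3/2 * norm w \<le> 2 * (exp K + 1) * norm w"
    by (intro mult_right_mono) (auto simp: add_pos_nonneg)
  ultimately show ?thesis by linarith
next
  case False
  have "norm (exp w - 1) \<le> norm (exp w) + norm (1::complex)" by (rule norm_triangle_ineq4)
  also have "\<dots> \<le> exp K + 1" using norm_exp[of w] assms by simp
  also have "\<dots> \<le> (exp K + 1) * (2 * norm w)" using False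
  proof -
    have "(exp K + 1) * 1 \<le> (exp K + 1) * (2 * norm w)" using False
      by (intro mult_left_mono) (auto simp: add_pos_nonneg)
    then show ?thesis by simp
  qed
  finally show ?thesis by (simp add: mult_ac)
qed

theorem lemma2p7:
  fixes q :: complex
  assumes "q \<noteq> 0" and "norm q > 1"
  shows "\<exists>C1 C2 :: real. C1 > 0 \<and> C2 > 0 \<and>
           (\<forall>m::nat. \<forall>x::complex. norm x \<le> 1 \<longrightarrow>
              norm (1 - Etilde q m x) \<le> C1 * (C2 * norm x) ^ (m + 1))"
proof -
  have q: "norm q > 1" by fact
  define a where "a = norm q"
  have a1: "a > 1" using q a_def by simp
  define K where "K = (a / (a - 1))^2"
  define D where "D = 2 * (exp K + 1)"
  have K0: "K > 0" using a1 by (simp add: K_def)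
  have D0: "D > 0" by (simp add: D_def add_pos_nonneg)
  have main: "norm (1 - Etilde q m x) \<le> (D * K) * ((1 / a) * norm x) ^ (m + 1)"
    if x: "norm x \<le> 1" for m x
  proof (cases "m = 0")
    case True then show ?thesis using D0 K0 a1 by (simp add: Etilde_def)
  next
    case False
    define T where "T = (\<Sum>j. tt q x (j + Suc m))"
    define S where "S = (\<Sum>k=1..m. tt q x k)"
    have "{..<Suc m} = insert 0 {1..m}" by auto
    then have "(\<Sum>i<Suc m. tt q x i) = S" by (simp add: S_def)
    then have LTS: "Lf q x = T + S" using Lf_split[OF q x, of "Suc m"] by (simp add: T_def)
    have "f1 q x * exp (Lf q x) = 1" using rr_one[OF q x] by (simp add: rr_def)
    then have "f1 q x = 1 / exp (Lf q x)" by (simp add: eq_divide_eq)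
    then have f1e: "f1 q x = exp (- Lf q x)" by (simp add: exp_minus inverse_eq_divide)
    have "Etilde q m x = f1 q x * exp S" using False by (simp add: Etilde_def S_def tt_def)
    also have "\<dots> = exp (- T)" using f1e LTS by (simp add: exp_add[symmetric])
    finally have E: "Etilde q m x = exp (- T)" .
    have TB: "norm T \<le> K * (norm x / a) ^ Suc m"
      using tail_bound[OF q x, of "Suc m"] by (simp add: T_def K_def a_def)
    have "(norm x / a) ^ Suc m \<le> 1" using x a1 by (intro power_le_one) auto
    then have "K * (norm x / a) ^ Suc m \<le> K * 1" using K0 by (intro mult_left_mono) auto
    then have "norm (- T) \<le> K" using TB by simp
    then have "norm (exp (- T) - 1) \<le> D * norm (- T)" unfolding D_def by (rule exp_bound)
    also have "\<dots> \<le> D * (K * (norm x / a) ^ Suc m)" using TB D0 by (intro mult_left_mono) auto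
    finally show ?thesis using E by (simp add: norm_minus_commute mult_ac)
  qed
  show ?thesis
    apply (rule exI[of _ "D * K"], rule exI[of _ "1 / a"])
    using main D0 K0 a1 by simp
qed

end
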